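(* Let $p$ be a prime and $a,b,c>0$ integers with $a,b\le p-1$ and $c\le b$. Assume either $a+b\le p-1$ or $c\le a+b-p+1$. Then $\gcd\big(f(a,b,c),f(a,b,c-1)\big)=1$ in $\overline{\mathbb{F}}_p[t]$.
   Context: For non-negative integers $a,b,c$, $f(a,b,c)\in\overline{\mathbb{F}}_p[t]$ is $f(a,b,c)=\sum_{i_2+i_3=c}\binom{a}{i_2}\binom{b}{i_3}t^{i_2}$ (binomial coefficients reduced mod $p$, $\binom{n}{i}=0$ for $i<0$ or $i>n$). *)

theory Defs
  imports "HOL-Computational_Algebra.Computational_Algebra"
begin

text \<open>f(a,b,c) = sum over i2 + i3 = c of binom(a,i2) binom(b,i3) t^i2, with coefficients
  taken in a ring (in characteristic p this reduces the binomials mod p).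
  Since i2, i3 are non-negative, i2 ranges over 0..c and i3 = c - i2.\<close>
definition fpoly :: "nat \<Rightarrow> nat \<Rightarrow> nat \<Rightarrow> 'a::comm_ring_1 poly" where
  "fpoly a b c = (\<Sum>i2\<le>c. monom (of_nat ((a choose i2) * (b choose (c - i2)))) i2)"

end

theory Submission
  imports Defs
begin

lemma coeff_fpoly:
  "coeff (fpoly a b c :: 'a::comm_ring_1 poly) n =
     (if n \<le> c then of_nat ((a choose n) * (b choose (c - n))) else 0)"
  unfolding fpoly_def by (simp add: coeff_sum coeff_monom)

lemma key_int:
  fixes A0 A1 B0 B1 i j a b :: int
  assumes h1: "i*A1 + i*A0 = (a+1)*A0" and h2: "(j+1)*B1 + j*B0 = b*B0"
  shows "(i+j+1)*A1*B1 + (i+j)*A1*B0 + (i+j)*A0*B1 + (i+j)*A0*B0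
       = b*A1*B0 + a*A0*B1 + (a+b+1)*A0*B0"
proof -
  have "(i+j+1)*A1*B1 + (i+j)*A1*B0 + (i+j)*A0*B1 + (i+j)*A0*B0 - (b*A1*B0 + a*A0*B1 + (a+b+1)*A0*B0)
     = B1*(i*A1 + i*A0 - (a+1)*A0) + A1*((j+1)*B1 + j*B0 - b*B0) + A0*((j+1)*B1 + j*B0 - b*B0)
       + B0*(i*A1 + i*A0 - (a+1)*A0)"
    by (simp add: algebra_simps)
  then show ?thesis using h1 h2 by simp
qed

lemma h1_nat:
  fixes i a :: nat assumes hi: "i \<ge> 1"
  shows "i * (a choose i) + i * (a choose (i - 1)) = (a + 1) * (a choose (i - 1))"
proof -
  obtain m where m: "i = Suc m" using hi by (cases i) auto
  have "Suc m * (a choose Suc m) = (a - m) * (a choose m)"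
    using times_binomial_minus1_eq[of "Suc m" a] binomial_absorb_comp[of a m] by simp
  moreover have "(a - m) * (a choose m) + Suc m * (a choose m) = (a+1) * (a choose m)"
  proof (cases "m \<le> a")
    case True
    have "(a - m) * (a choose m) + Suc m * (a choose m) = (a - m + Suc m) * (a choose m)"
      by (simp only: add_mult_distrib)
    then show ?thesis using True by simp
  next
    case False then show ?thesis by simp
  qed
  ultimately show ?thesis using m by simp
qed

lemma h2_nat: "(j+1) * (b choose (j+1)) + j * (b choose j) = b * (b choose j)" for j b :: nat
proof -
  have "(j+1) * (b choose (j+1)) = (b - j) * (b choose j)"
    using times_binomial_minus1_eq[of "Suc j" b] binomial_absorb_comp[of b j] by simp
  moreover have "(b - j) * (b choose j) + j * (b choose j) = b * (b choose j)"
  proof (cases "j \<le> b")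
    case True
    have "(b - j) * (b choose j) + j * (b choose j) = (b - j + j) * (b choose j)"
      by (simp only: add_mult_distrib)
    then show ?thesis using True by simp
  next
    case False then show ?thesis by simp
  qed
  ultimately show ?thesis by simp
qed


lemma rec_nat:
  fixes a b k n :: nat
  assumes k: "k \<ge> 1"
  shows "(k+1) * (if n \<le> k+1 then (a choose n) * (b choose (k+1-n)) else 0)
       + k * (if n \<le> k then (a choose n) * (b choose (k-n)) else 0)
       + k * (if 1 \<le> n \<and> n \<le> k+1 then (a choose (n-1)) * (b choose (k+1-n)) else 0)
       + k * (if 1 \<le> n \<and> n \<le> k then (a choose (n-1)) * (b choose (k-n)) else 0)
     = b * (if n \<le> k then (a choose n) * (b choose (k-n)) else 0)
       + a * (if 1 \<le> n \<and> n \<le> k+1 then (a choose (n-1)) * (b choose (k+1-n)) else 0)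
       + (a+b+1) * (if 1 \<le> n \<and> n \<le> k then (a choose (n-1)) * (b choose (k-n)) else 0)"
proof -
  consider "n = 0" | "1 \<le> n \<and> n \<le> k" | "n = k+1" | "n > k+1" by linarith
  then show ?thesis
  proof cases
    case 1
    have "(k+1) * (b choose (k+1)) + k * (b choose k) = b * (b choose k)" by (rule h2_nat)
    then show ?thesis using 1 by simp
  next
    case 2
    define j where "j = k - n"
    have kk: "k + 1 - n = j + 1" "k - n = j" "k = n + j" using 2 by (auto simp: j_def)
    have e1: "n * (a choose n) + n * (a choose (n - 1)) = (a + 1) * (a choose (n - 1))"
      using 2 by (intro h1_nat) auto
    have e2: "(j+1) * (b choose (j+1)) + j * (b choose j) = b * (b choose j)" by (rule h2_nat)
    have "int ((n + j + 1) * (a choose n) * (b choose (j+1)) + (n+j) * (a choose n) * (b choose j)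
         + (n+j) * (a choose (n-1)) * (b choose (j+1)) + (n+j) * (a choose (n-1)) * (b choose j))
        = int (b * (a choose n) * (b choose j) + a * (a choose (n-1)) * (b choose (j+1))
         + (a+b+1) * (a choose (n-1)) * (b choose j))"
    proof -
      have e1': "int n * int (a choose n) + int n * int (a choose (n-1)) = (int a + 1) * int (a choose (n-1))"
        using arg_cong[OF e1, of int] by (simp add: distrib_right)
      have e2': "(int j + 1) * int (b choose (j+1)) + int j * int (b choose j) = int b * int (b choose j)"
        using arg_cong[OF e2, of int] by (simp add: distrib_right)
      show ?thesis
        using key_int[OF e1' e2'] by (simp add: distrib_right)
    qed
    then have "(n + j + 1) * (a choose n) * (b choose (j+1)) + (n+j) * (a choose n) * (b choose j)
         + (n+j) * (a choose (n-1)) * (b choose (j+1)) + (n+j) * (a choose (n-1)) * (b choose j)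
        = b * (a choose n) * (b choose j) + a * (a choose (n-1)) * (b choose (j+1))
         + (a+b+1) * (a choose (n-1)) * (b choose j)" by (simp only: of_nat_eq_iff)
    then have X: "(k + 1) * ((a choose n) * (b choose (j+1))) + k * ((a choose n) * (b choose j))
         + k * ((a choose (n-1)) * (b choose (j+1))) + k * ((a choose (n-1)) * (b choose j))
        = b * ((a choose n) * (b choose j)) + a * ((a choose (n-1)) * (b choose (j+1)))
         + (a+b+1) * ((a choose (n-1)) * (b choose j))"
      unfolding kk(3) by (simp only: mult.assoc)
    have c1: "n \<le> k + 1" "n \<le> k" "1 \<le> n \<and> n \<le> k + 1" "1 \<le> n \<and> n \<le> k" using 2 by auto
    show ?thesis unfolding if_P[OF c1(1)] if_P[OF c1(2)] if_P[OF c1(3)] if_P[OF c1(4)] kk(1) kk(2)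
      by (rule X)
  next
    case 3
    have "(k+1) * (a choose (k+1)) + (k+1) * (a choose (k+1-1)) = (a + 1) * (a choose (k+1-1))"
      by (rule h1_nat) simp
    then have "(k+1) * (a choose (k+1)) + k * (a choose k) = a * (a choose k)"
      by (simp add: distrib_right)
    then show ?thesis using 3 by simp
  next
    case 4
    then show ?thesis by simp
  qed
qed

lemma rec_poly:
  fixes a b k :: nat
  assumes k: "k \<ge> 1"
  shows "smult (of_nat (k+1)) (fpoly a b (k+1)) + smult (of_nat k) (fpoly a b k)
        + pCons 0 (smult (of_nat k) (fpoly a b k)) + pCons 0 (smult (of_nat k) (fpoly a b (k-1)))
       = smult (of_nat b) (fpoly a b k) + pCons 0 (smult (of_nat a) (fpoly a b k))
        + pCons 0 (smult (of_nat (a+b+1)) (fpoly a b (k-1)) :: 'a::comm_ring_1 poly)"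
proof (rule poly_eqI)
  fix n
  note R = arg_cong[OF rec_nat[OF k, of n a b], of "of_nat :: nat \<Rightarrow> 'a"]
  show "coeff (smult (of_nat (k+1)) (fpoly a b (k+1)) + smult (of_nat k) (fpoly a b k)
        + pCons 0 (smult (of_nat k) (fpoly a b k)) + pCons 0 (smult (of_nat k) (fpoly a b (k-1)))) n
       = coeff (smult (of_nat b) (fpoly a b k) + pCons 0 (smult (of_nat a) (fpoly a b k))
        + pCons 0 (smult (of_nat (a+b+1)) (fpoly a b (k-1)) :: 'a::comm_ring_1 poly)) n"
  proof (cases n)
    case 0
    then show ?thesis using R k by (simp add: coeff_fpoly distrib_right)
  next
    case (Suc m)
    have mk: "(m \<le> k - Suc 0) = (m < k)" using k by arith
    have kk: "\<not> k \<le> k - Suc 0" using k by arith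
    show ?thesis using R k kk unfolding Suc
      by (cases "m < k"; cases "m = k") (simp_all add: coeff_fpoly distrib_right mk)
  qed
qed

lemma rearr:
  fixes A1 A2 A3 A4 B1 B2 B3 :: "'a::ab_group_add"
  assumes "A1 + A2 + A3 + A4 = B1 + B2 + B3"
  shows "A4 - B3 = B1 + B2 - A1 - A2 - A3"
proof -
  have "A4 - B3 = (A1 + A2 + A3 + A4) - A1 - A2 - A3 - B3" by (simp add: algebra_simps)
  also have "\<dots> = (B1 + B2 + B3) - A1 - A2 - A3 - B3" using assms by simp
  also have "\<dots> = B1 + B2 - A1 - A2 - A3" by (simp add: algebra_simps)
  finally show ?thesis .
qed

lemma dvd_pCons0:
  fixes d q :: "'a::comm_ring_1 poly"
  assumes "d dvd q" shows "d dvd pCons 0 q"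
proof -
  have "pCons 0 q = [:0,1:] * q" by simp
  then show ?thesis using dvd_mult[OF assms, of "[:0,1:]"] by simp
qed

lemma choose_not_dvd:
  fixes p b k :: nat
  assumes "prime p" "b < p" "k \<le> b"
  shows "\<not> p dvd (b choose k)"
proof
  assume "p dvd (b choose k)"
  then have "p dvd fact k * fact (b - k) * (b choose k)" by simp
  then have "p dvd fact b" using binomial_fact_lemma[OF assms(3)] by simp
  then show False using prime_dvd_fact_iff[OF assms(1)] assms(2) by simp
qed

theorem lemmaA5:
  fixes p a b c :: nat
  assumes "prime p"
    and "CHAR('k::{alg_closed_field,field_gcd}) = p"
    and "0 < a" "0 < b" "0 < c"
    and "a \<le> p - 1" "b \<le> p - 1" "c \<le> b"
    and "a + b \<le> p - 1 \<or> int c \<le> int a + int b - int p + 1"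
  shows "gcd (fpoly a b c :: 'k poly) (fpoly a b (c - 1)) = 1"
proof -
  have p2: "p \<ge> 2" using assms(1) prime_ge_2_nat by blast
  have nz: "of_nat x \<noteq> (0::'k)" if "\<not> p dvd x" for x
    using that of_nat_eq_0_iff_char_dvd[where 'a='k, of x] assms(2) by simp
  have polyF0: "poly (fpoly a b m :: 'k poly) 0 \<noteq> 0" if "m \<le> b" for m
  proof -
    have "poly (fpoly a b m :: 'k poly) 0 = of_nat (b choose m)"
      by (simp add: poly_0_coeff_0 coeff_fpoly)
    moreover have "\<not> p dvd (b choose m)"
      using choose_not_dvd[OF assms(1), of b m] that assms(7) p2 by simp
    ultimately show ?thesis using nz by simp
  qed
  have e_nz: "of_nat (a + b + 1 - k) \<noteq> (0::'k)" if "k + 1 \<le> c" "k \<ge> 1" for k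
  proof (rule nz)
    let ?x = "a + b + 1 - k"
    have x0: "?x > 0" "?x \<le> a + b" using that assms(8) assms(3) by auto
    show "\<not> p dvd ?x"
    proof
      assume "p dvd ?x"
      then obtain q where q: "?x = p * q" by (auto elim: dvdE)
      show False
      proof (cases "a + b \<le> p - 1")
        case True
        then have "?x < p" using x0 p2 by linarith
        then show False using q x0 by (cases q) auto
      next
        case False
        then have "int c \<le> int a + int b - int p + 1" using assms(9) by blast
        then have "?x > p" "?x < 2 * p" using that assms(6) assms(7) p2 x0 by linarith+
        then show False using q by (cases q; cases "q - 1") auto
      qed
    qed
  qed
  have t_prime: "prime_elem ([:0,1:] :: 'k poly)"
    by (rule prime_elem_linear_field_poly) simp
  have main: "\<forall>d. d dvd (fpoly a b m :: 'k poly) \<longrightarrow> d dvd fpoly a b (m - 1) \<longrightarrow> is_unit d"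
    if "1 \<le> m" "m \<le> c" for m
    using that
  proof (induction m)
    case 0 then show ?case by simp
  next
    case (Suc k)
    show ?case
    proof (intro allI impI)
      fix d :: "'k poly"
      assume d1: "d dvd fpoly a b (Suc k)" and d2: "d dvd fpoly a b (Suc k - 1)"
      show "is_unit d"
      proof (cases "k = 0")
        case True
        then have "fpoly a b (Suc k - 1) = (1 :: 'k poly)" by (simp add: fpoly_def)
        then show ?thesis using d2 by simp
      next
        case False
        then have k1: "k \<ge> 1" by simp
        have d2': "d dvd fpoly a b k" using d2 by simp
        note E = rec_poly[OF k1, of a b, where 'a='k]
        let ?G = "fpoly a b (k - 1) :: 'k poly"
        have kle: "k \<le> a + b + 1" using Suc.prems assms(8) by linarith
        have "pCons 0 (smult (of_nat k) ?G) - pCons 0 (smult (of_nat (a+b+1)) ?G)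
            = smult (of_nat b) (fpoly a b k) + pCons 0 (smult (of_nat a) (fpoly a b k))
             - smult (of_nat (k+1)) (fpoly a b (k+1)) - smult (of_nat k) (fpoly a b k)
             - pCons 0 (smult (of_nat k) (fpoly a b k))"
          by (rule rearr[OF E])
        moreover have "d dvd smult (of_nat b) (fpoly a b k) + pCons 0 (smult (of_nat a) (fpoly a b k))
             - smult (of_nat (k+1)) (fpoly a b (k+1)) - smult (of_nat k) (fpoly a b k)
             - pCons 0 (smult (of_nat k) (fpoly a b k))"
          using d1 d2' by (intro dvd_diff dvd_add dvd_smult dvd_pCons0, simp_all)
        ultimately have "d dvd pCons 0 (smult (of_nat k) ?G) - pCons 0 (smult (of_nat (a+b+1)) ?G)"
          by simp
        moreover have "pCons 0 (smult (of_nat k) ?G) - pCons 0 (smult (of_nat (a+b+1)) ?G)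
            = [:0,1:] * smult (- of_nat (a + b + 1 - k)) ?G"
          using kle by (simp add: of_nat_diff[OF kle] smult_diff_left diff_pCons)
        ultimately have dd: "d dvd [:0,1:] * smult (- of_nat (a + b + 1 - k)) ?G" by simp
        have "\<not> [:0,1:] dvd d"
        proof
          assume "[:0,1:] dvd d"
          then have "[:0,1:] dvd (fpoly a b k :: 'k poly)" using d2' by (rule dvd_trans)
          then have "poly (fpoly a b k :: 'k poly) 0 = 0" by (simp add: dvd_iff_poly_eq_0)
          then show False using polyF0[of k] Suc.prems assms(8) by simp
        qed
        then have "coprime [:0,1:] d"
          by (rule prime_elem_imp_coprime[OF t_prime])
        then have cop: "coprime d [:0,1:]" by (rule coprime_commute[THEN iffD1])
        have "d dvd smult (- of_nat (a + b + 1 - k)) ?G"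
          by (rule coprime_dvd_mult_right_iff[OF cop, THEN iffD1, OF dd])
        then have "d dvd ?G"
          using e_nz[of k] Suc.prems k1 by (simp add: dvd_smult_iff)
        then show ?thesis using Suc.IH k1 Suc.prems d2' by simp
      qed
    qed
  qed
  have "coprime (fpoly a b c :: 'k poly) (fpoly a b (c - 1))"
    using main[of c] assms(5) by (intro coprimeI) auto
  then show ?thesis by (rule coprime_imp_gcd_eq_1)
qed

end
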